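(* Let $\mu>0$, let $a\in\left(-\frac{2\mu}{9},0\right)\cup\left(0,\frac{4\mu}{9}\right)$ be real and let $s_1\in\left[\frac{2\mu}{3},\infty\right)$. Define $$H(\tilde z;s_1,a)=\frac{27a^2\tilde z\,(2s_1-3a)}{27a^3\tilde z-27a^2\tilde z\,s_1-(\tilde z-1)^2s_1^3},\qquad \beta_1(a,s_1)=\frac{27a^2}{s_1^3}(3a-2s_1),$$ and $F(\tilde z;s_1,a)=H(\tilde z;s_1,a)/\beta_1(a,s_1)$. Then $F(\cdot\,;s_1,a)$ is a schlicht function on the unit disc, i.e. it is holomorphic and injective on $\{|\tilde z|<1\}$ with $F(0)=0$ and $F'(0)=1$; equivalently, $H(\cdot\,;s_1,a)$ is univalent on the unit disc $|\tilde z|<1$.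
   Context: A function is univalent on a domain if it is holomorphic and injective there. A schlicht function is a univalent function $f$ on the open unit disc with $f(0)=0$ and $f'(0)=1$. *)

theory Defs
  imports "HOL-Complex_Analysis.Complex_Analysis"
begin

definition univalent_on :: "(complex \<Rightarrow> complex) \<Rightarrow> complex set \<Rightarrow> bool" where
  "univalent_on f S \<longleftrightarrow> f holomorphic_on S \<and> inj_on f S"

definition schlicht :: "(complex \<Rightarrow> complex) \<Rightarrow> bool" where
  "schlicht f \<longleftrightarrow> univalent_on f (ball 0 1) \<and> f 0 = 0 \<and> deriv f 0 = 1"

definition H :: "real \<Rightarrow> real \<Rightarrow> complex \<Rightarrow> complex" where
  "H s1 a z = (27 * of_real a ^ 2 * z * (2 * of_real s1 - 3 * of_real a)) /
     (27 * of_real a ^ 3 * z - 27 * of_real a ^ 2 * z * of_real s1 - (z - 1) ^ 2 * of_real s1 ^ 3)"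

definition beta1 :: "real \<Rightarrow> real \<Rightarrow> real" where
  "beta1 a s1 = 27 * a ^ 2 / s1 ^ 3 * (3 * a - 2 * s1)"

definition F :: "real \<Rightarrow> real \<Rightarrow> complex \<Rightarrow> complex" where
  "F s1 a z = H s1 a z / of_real (beta1 a s1)"

end

theory Submission
  imports Defs
begin

lemma quad_nz:
  fixes z :: complex and w :: real
  assumes "\<bar>w\<bar> \<le> 2" "norm z < 1"
  shows "z^2 - of_real w * z + 1 \<noteq> 0"
proof
  assume h: "z^2 - of_real w * z + 1 = 0"
  define x where "x = Re z"
  define y where "y = Im z"
  have re: "x^2 - y^2 - w*x + 1 = 0" and im: "2*x*y - w*y = 0"
    using arg_cong[OF h, of Re] arg_cong[OF h, of Im]
    by (simp_all add: power2_eq_square x_def y_def algebra_simps)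
  have "(norm z)^2 < 1" using assms(2) by (simp add: power_less_one_iff)
  then have n: "x^2 + y^2 < 1" unfolding x_def y_def by (simp add: cmod_power2)
  show False
  proof (cases "y = 0")
    case True
    then have "x^2 + 1 = w*x" using re by simp
    also have "\<dots> \<le> 2 * \<bar>x\<bar>"
      by (metis abs_ge_self abs_mult abs_ge_zero assms(1) mult_right_mono order_trans)
    finally have "(\<bar>x\<bar> - 1)^2 \<le> 0" by (simp add: power2_eq_square algebra_simps)
    then have "\<bar>x\<bar> = 1" by simp
    then have "x^2 = 1" by (metis power2_abs one_power2)
    then show False using n True by simp
  next
    case False
    then have "w = 2*x" using im by (metis mult.commute right_diff_distrib' eq_iff_diff_eq_0 mult_cancel_left mult.assoc)
    then have "x^2 + y^2 = 1" using re by (simp add: power2_eq_square algebra_simps)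
    then show False using n by simp
  qed
qed


theorem lemma2:
  fixes \<mu> a s1 :: real
  assumes "\<mu> > 0"
    and "a \<in> {-(2*\<mu>/9)<..<0} \<union> {0<..<4*\<mu>/9}"
    and "s1 \<ge> 2*\<mu>/3"
  shows "schlicht (F s1 a)"
proof -
  have s0: "s1 > 0" using assms by simp
  have a0: "a \<noteq> 0" using assms by auto
  have as: "a < s1" and a2: "3*a < 2* s1" and a3: "s1 + 3*a > 0" using assms by auto
  define w where "w = 2 + 27*a^2*(a-s1)/s1^3"
  have "27*a^2*(s1-a) \<le> 4* s1^3"
  proof -
    have "4* s1^3 - 27*a^2*(s1-a) = (s1+3*a)*(3*a-2* s1)^2" by (simp add: power2_eq_square power3_eq_cube algebra_simps)
    also have "\<dots> \<ge> 0" using a3 by simp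
    finally show ?thesis by simp
  qed
  moreover have "27*a^2*(s1-a) \<ge> 0" using as by simp
  ultimately have w2: "\<bar>w\<bar> \<le> 2" using s0 unfolding w_def
    by (auto simp: abs_if field_simps)
  define D where "D = (\<lambda>z::complex. 27 * of_real a ^ 3 * z - 27 * of_real a ^ 2 * z * of_real s1 - (z - 1) ^ 2 * of_real s1 ^ 3)"
  define c where "c = (27 * of_real a ^ 2 * (2 * of_real s1 - 3 * of_real a) :: complex)"
  have Dw: "D z = - (of_real s1 ^ 3) * (z^2 - of_real w * z + 1)" for z
    using s0 unfolding D_def w_def by (simp add: field_simps power2_eq_square power3_eq_cube)
  have Dnz: "D z \<noteq> 0" if "z \<in> ball 0 1" for z
    using quad_nz[OF w2, of z] that s0 unfolding Dw by simp
  have c0: "c \<noteq> 0" using a0 a2 unfolding c_def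
    by (metis (no_types) a2 mult_eq_0_iff of_real_eq_0_iff power_eq_0_iff zero_neq_numeral eq_iff_diff_eq_0 less_irrefl of_real_mult of_real_diff of_real_numeral)
  have Heq: "H s1 a = (\<lambda>z. c * z / D z)"
    unfolding H_def c_def D_def by (auto simp: algebra_simps)
  have b0: "beta1 a s1 \<noteq> 0" using a0 a2 s0 unfolding beta1_def by simp
  have Feq: "F s1 a = (\<lambda>z. c * z / D z / of_real (beta1 a s1))"
    unfolding F_def Heq ..
  have hol: "F s1 a holomorphic_on ball 0 1"
    unfolding Feq using Dnz by (auto intro!: holomorphic_intros simp: D_def)
  have inj: "inj_on (F s1 a) (ball 0 1)"
  proof (rule inj_onI)
    fix z1 z2 assume z1: "z1 \<in> ball 0 1" and z2: "z2 \<in> ball 0 1" and e: "F s1 a z1 = F s1 a z2"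
    have "c * z1 / D z1 = c * z2 / D z2" 
    proof -
      have "c * z1 / D z1 / of_real (beta1 a s1) = c * z2 / D z2 / of_real (beta1 a s1)"
        using e unfolding Feq by simp
      then show ?thesis using b0 by (metis divide_cancel_right of_real_eq_0_iff)
    qed
    then have "c * z1 * D z2 = c * z2 * D z1" using Dnz[OF z1] Dnz[OF z2] by (simp add: field_simps)
    then have "z1 * D z2 = z2 * D z1" using c0 by simp
    then have "z1 * (z2^2 - of_real w * z2 + 1) = z2 * (z1^2 - of_real w * z1 + 1)"
      unfolding Dw using s0 by simp
    then have "(z1 - z2) * (1 - z1 * z2) = 0" by (simp add: algebra_simps power2_eq_square)
    moreover have "z1 * z2 \<noteq> 1"
    proof
      assume "z1 * z2 = 1"
      then have "norm z1 * norm z2 = 1" by (metis norm_mult norm_one)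
      moreover have "norm z1 * norm z2 < 1" using z1 z2 mult_strict_mono[of "norm z1" 1 "norm z2" 1]
        by simp
      ultimately show False by simp
    qed
    ultimately show "z1 = z2" by simp
  qed
  have F0: "F s1 a 0 = 0" unfolding Feq by simp
  have D0: "D 0 = - (of_real s1 ^ 3)" unfolding D_def by simp
  have "D field_differentiable (at 0)" unfolding D_def
    by (intro derivative_intros)
  then obtain D' where dD: "(D has_field_derivative D') (at 0)"
    using field_differentiable_def by blast
  have dz: "((\<lambda>z. c * z) has_field_derivative c) (at 0)"
    using DERIV_cmult[OF DERIV_ident, of c] by simp
  have "((\<lambda>z. c * z / D z) has_field_derivative (c * D 0 - c * 0 * D') / (D 0 * D 0)) (at 0)"
    using DERIV_divide[OF dz dD] D0 s0 by simp
  then have "((\<lambda>z. c * z / D z / of_real (beta1 a s1)) has_field_derivative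
           ((c * D 0 - c * 0 * D') / (D 0 * D 0)) / of_real (beta1 a s1)) (at 0)"
    by (rule DERIV_cdivide)
  moreover have "complex_of_real a * 3 \<noteq> complex_of_real s1 * 2"
  proof
    assume "complex_of_real a * 3 = complex_of_real s1 * 2"
    then have "complex_of_real (a * 3) = complex_of_real (s1 * 2)" by simp
    then have "a * 3 = s1 * 2" using of_real_eq_iff by blast
    then show False using a2 by simp
  qed
  moreover have "((c * D 0 - c * 0 * D') / (D 0 * D 0)) / of_real (beta1 a s1) = 1"
    using s0 a0 a2 calculation(2) unfolding D0 c_def beta1_def by (simp add: field_simps power2_eq_square power3_eq_cube)
  ultimately have "deriv (F s1 a) 0 = 1" unfolding Feq using DERIV_imp_deriv by (metis (no_types, lifting))
  then show ?thesis unfolding schlicht_def univalent_on_def using hol inj F0 by simp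
qed

end
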